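(* Let $X$ be a Banach space as described in the context, let $f\in X$ not be a polynomial, and suppose there exists a sequence $p_n\in\mathcal{P}_n[\mathbb{Z}]$ with $\lim_{n\to\infty}\|f-p_n\|=0$. Then the radius of convergence of the Taylor series of $f$ in powers of $z$ is at most $1$.
   Context: $\mathbb{D}=\{z\in\mathbb{C}:|z|<1\}$. $X$ is a complex Banach space of functions analytic in $\mathbb{D}$ whose norm $\|\cdot\|$ satisfies: (i) $\|f(\cdot\, e^{it})\|=\|f(\cdot)\|$ for all $t\in\mathbb{R}$ and $f\in X$; (ii) $\|f\|<\infty$ for every entire function $f$; (iii) for all $f\in X$ and $g\in L[0,2\pi]$, $\big\|\frac{1}{2\pi}\int_0^{2\pi} f(ze^{it})g(t)\,dt\big\|\le \frac{1}{2\pi}\int_0^{2\pi}|g(t)|\,dt\cdot\|f\|$. A complex number is called an integer if its real and imaginary parts are integers; $\mathcal{P}_n[\mathbb{Z}]$ is the set of complex polynomials of degree at most $n-1$ with integer coefficients in this sense. *)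

theory Defs
  imports "HOL-Complex_Analysis.Complex_Analysis" "HOL-Computational_Algebra.Polynomial"
begin

definition complex_integer :: "complex \<Rightarrow> bool" where
  "complex_integer z \<longleftrightarrow> Re z \<in> \<int> \<and> Im z \<in> \<int>"

definition int_polys :: "nat \<Rightarrow> complex poly set" where
  "int_polys n = {p. degree p < n \<and> (\<forall>i. complex_integer (coeff p i))}"

definition rot_conv :: "(complex \<Rightarrow> complex) \<Rightarrow> (real \<Rightarrow> complex) \<Rightarrow> complex \<Rightarrow> complex" where
  "rot_conv f g z = complex_of_real (1 / (2 * pi)) * integral {0..2*pi} (\<lambda>t. f (z * cis t) * g t)"

text \<open>X (a set of functions, identified by their values on the unit disk) with norm N
  is a complex Banach space of functions analytic in the disk satisfying (i)-(iii).\<close>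
definition admissible_space :: "(complex \<Rightarrow> complex) set \<Rightarrow> ((complex \<Rightarrow> complex) \<Rightarrow> real) \<Rightarrow> bool" where
  "admissible_space X N \<longleftrightarrow>
    \<comment> \<open>functions analytic in the disk, elements determined by their values on the disk\<close>
    (\<forall>f\<in>X. f analytic_on ball 0 1) \<and>
    (\<forall>f\<in>X. \<forall>g. (\<forall>z\<in>ball 0 1. g z = f z) \<longrightarrow> g \<in> X \<and> N g = N f) \<and>
    \<comment> \<open>complex vector space\<close>
    (\<forall>f\<in>X. \<forall>g\<in>X. (\<lambda>z. f z + g z) \<in> X) \<and>
    (\<forall>f\<in>X. \<forall>c::complex. (\<lambda>z. c * f z) \<in> X) \<and>
    \<comment> \<open>norm axioms\<close>
    (\<forall>f\<in>X. N f \<ge> 0) \<and>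
    (\<forall>f\<in>X. N f = 0 \<longleftrightarrow> (\<forall>z\<in>ball 0 1. f z = 0)) \<and>
    (\<forall>f\<in>X. \<forall>c::complex. N (\<lambda>z. c * f z) = norm c * N f) \<and>
    (\<forall>f\<in>X. \<forall>g\<in>X. N (\<lambda>z. f z + g z) \<le> N f + N g) \<and>
    \<comment> \<open>completeness\<close>
    (\<forall>u::nat \<Rightarrow> complex \<Rightarrow> complex.
       (\<forall>n. u n \<in> X) \<and> (\<forall>e>0. \<exists>M. \<forall>m\<ge>M. \<forall>n\<ge>M. N (\<lambda>z. u m z - u n z) < e)
       \<longrightarrow> (\<exists>g\<in>X. (\<lambda>n. N (\<lambda>z. u n z - g z)) \<longlonglongrightarrow> 0)) \<and>
    \<comment> \<open>(i) rotation invariance\<close>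
    (\<forall>f\<in>X. \<forall>t::real. (\<lambda>z. f (z * cis t)) \<in> X \<and> N (\<lambda>z. f (z * cis t)) = N f) \<and>
    \<comment> \<open>(ii) every entire function has finite norm, i.e. belongs to X\<close>
    (\<forall>f. f holomorphic_on UNIV \<longrightarrow> f \<in> X) \<and>
    \<comment> \<open>(iii)\<close>
    (\<forall>f\<in>X. \<forall>g::real \<Rightarrow> complex. g absolutely_integrable_on {0..2*pi} \<longrightarrow>
       rot_conv f g \<in> X \<and>
       N (rot_conv f g) \<le> (1 / (2 * pi)) * integral {0..2*pi} (\<lambda>t. norm (g t)) * N f)"

end

theory Submission imports Defs begin

lemma circle_coeff:
  fixes F :: "complex \<Rightarrow> complex"
  assumes holF: "F holomorphic_on ball 0 R" and R: "R > 1"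
  shows "((\<lambda>t. F (cis t) * cis (- (of_nat k * t))) has_integral
           (2 * pi * ((deriv ^^ k) F 0 / fact k))) {0..2*pi}"
proof -
  have contF: "continuous_on (cball 0 1) F"
  proof (rule continuous_on_subset[OF holomorphic_on_imp_continuous_on[OF holF]])
    show "cball 0 1 \<subseteq> ball (0::complex) R" using R by (simp add: cball_subset_ball_iff)
  qed
  have hol1: "F holomorphic_on ball 0 1"
    by (rule holomorphic_on_subset[OF holF]) (use R in \<open>simp add: subset_ball\<close>)
  have "((\<lambda>u. F u / (u - 0) ^ (Suc k)) has_contour_integral ((2 * pi * \<i>) / (fact k) * (deriv ^^ k) F 0))
           (circlepath 0 1)"
    by (rule Cauchy_has_contour_integral_higher_derivative_circlepath[OF contF hol1]) simp
  then have I: "((\<lambda>x. F (circlepath 0 1 x) / (circlepath 0 1 x) ^ Suc k * vector_derivative (circlepath 0 1) (at x within {0..1}))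
     has_integral ((2 * pi * \<i>) / (fact k) * (deriv ^^ k) F 0)) {0..1}"
    by (simp add: has_contour_integral_def)
  have I2: "((\<lambda>x. (2 * pi * \<i>) * (F (cis (2*pi*x)) * cis (- (of_nat k * (2*pi*x)))))
     has_integral ((2 * pi * \<i>) / (fact k) * (deriv ^^ k) F 0)) {0..1}"
  proof (rule has_integral_eq[OF _ I])
    fix x :: real assume x: "x \<in> {0..1}"
    have e: "exp (2 * of_real pi * \<i> * of_real x) = cis (2*pi*x)"
      by (simp add: cis_conv_exp mult_ac)
    have c: "cis (2*pi*x) \<noteq> 0" by simp
    have cp: "circlepath 0 1 x = cis (2*pi*x)" by (simp add: circlepath e)
    have vd: "vector_derivative (circlepath 0 1) (at x within {0..1}) = 2 * pi * \<i> * cis (2*pi*x)"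
      using x by (simp add: vector_derivative_circlepath01 e)
    have inv: "cis (- (of_nat k * (2*pi*x))) = inverse (cis (2*pi*x) ^ k)"
      using Complex.DeMoivre[of "2*pi*x" k] by simp
    show "F (circlepath 0 1 x) / (circlepath 0 1 x) ^ Suc k * vector_derivative (circlepath 0 1) (at x within {0..1})
        = (2 * pi * \<i>) * (F (cis (2*pi*x)) * cis (- (of_nat k * (2*pi*x))))"
      unfolding cp vd inv using c by (simp add: field_simps)
  qed
  have I3: "((\<lambda>x. F (cis (2*pi*x)) * cis (- (of_nat k * (2*pi*x))))
     has_integral ((deriv ^^ k) F 0 / fact k)) {0..1}"
    using has_integral_mult_right[OF I2, of "inverse (2 * pi * \<i>)"]
    by (simp add: field_simps)
  have "((\<lambda>x. F (cis (2*pi*(x/(2*pi)))) * cis (- (of_nat k * (2*pi*(x/(2*pi)))))) has_integral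
          (1 / \<bar>1/(2*pi)\<bar>) *\<^sub>R ((deriv ^^ k) F 0 / fact k)) ((\<lambda>x. x / (1/(2*pi))) ` {0..1})"
    using has_integral_stretch_real[OF I3, of "1/(2*pi)"] by (simp add: mult_ac)
  moreover have "(\<lambda>x. x / (1/(2*pi))) ` {0..1} = {0..2*pi}"
    by (subst image_divide_atLeastAtMost) auto
  ultimately show ?thesis by (simp add: scaleR_conv_of_real)
qed


lemma rot_conv_coeff:
  fixes h :: "complex \<Rightarrow> complex"
  assumes holh: "h holomorphic_on ball 0 1" and z: "z \<in> ball 0 1"
  shows "rot_conv h (\<lambda>t. cis (- (of_nat k * t))) z = (deriv ^^ k) h 0 / fact k * z ^ k"
proof -
  define R where "R = (if z = 0 then 2 else 1 / norm z)"
  have R: "R > 1" using z by (auto simp: R_def field_simps)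
  have sub: "\<And>w. w \<in> ball 0 R \<Longrightarrow> z * w \<in> ball 0 1"
  proof -
    fix w :: complex assume w: "w \<in> ball 0 R"
    show "z * w \<in> ball 0 1"
    proof (cases "z = 0")
      case True then show ?thesis by simp
    next
      case False
      then have "norm w < 1 / norm z" using w by (simp add: R_def)
      then have "norm z * norm w < 1" using False by (simp add: field_simps)
      then show ?thesis by (simp add: norm_mult)
    qed
  qed
  have holF: "(\<lambda>w. h (z * w)) holomorphic_on ball 0 R"
  proof -
    have "(h \<circ> (\<lambda>w. z * w)) holomorphic_on ball 0 R"
      by (rule holomorphic_on_compose) (auto intro!: holomorphic_intros holomorphic_on_subset[OF holh] sub)
    then show ?thesis by (simp add: o_def)
  qed
  have D: "(deriv ^^ k) (\<lambda>w. h (z * w)) 0 = z ^ k * (deriv ^^ k) h 0"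
    using higher_deriv_compose_linear[OF holh, of "ball 0 R" 0 z k] sub R by simp
  have "((\<lambda>t. h (z * cis t) * cis (- (of_nat k * t))) has_integral
           (2 * pi * ((z ^ k * (deriv ^^ k) h 0) / fact k))) {0..2*pi}"
    using circle_coeff[OF holF R, of k] D by simp
  then have "integral {0..2*pi} (\<lambda>t. h (z * cis t) * cis (- (of_nat k * t))) =
      2 * pi * ((z ^ k * (deriv ^^ k) h 0) / fact k)"
    by (rule integral_unique)
  then show ?thesis by (simp add: rot_conv_def field_simps)
qed

lemma higher_deriv_poly: "(deriv ^^ k) (\<lambda>w. poly p w) = (\<lambda>w. poly ((pderiv ^^ k) p) w)"
proof (induction k)
  case 0 then show ?case by simp
next
  case (Suc k)
  have "(deriv ^^ Suc k) (\<lambda>w. poly p w) = deriv (\<lambda>w. poly ((pderiv ^^ k) p) w)"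
    by (simp only: funpow.simps comp_apply Suc.IH)
  also have "\<dots> = (\<lambda>w. poly (pderiv ((pderiv ^^ k) p)) w)"
    by (rule ext, rule DERIV_imp_deriv, rule poly_DERIV)
  finally show ?case by (simp only: funpow.simps comp_apply)
qed

lemma poly_taylor_coeff: "(deriv ^^ k) (\<lambda>w. poly p w) 0 / fact k = coeff p k"
proof -
  have "(deriv ^^ k) (\<lambda>w. poly p w) 0 = coeff ((pderiv ^^ k) p) 0"
    by (simp only: higher_deriv_poly poly_0_coeff_0)
  also have "\<dots> = fact k * coeff p k"
    by (simp add: coeff_higher_pderiv pochhammer_fact)
  finally show ?thesis by simp
qed

lemma gauss_int_small:
  assumes "complex_integer c" "norm c < 1" shows "c = 0"
proof -
  have "\<bar>Re c\<bar> < 1" "\<bar>Im c\<bar> < 1"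
    using assms(2) abs_Re_le_cmod abs_Im_le_cmod order.strict_trans1 by blast+
  moreover obtain a b where "Re c = of_int a" "Im c = of_int b"
    using assms(1) by (auto simp: complex_integer_def elim!: Ints_cases)
  ultimately have "real_of_int \<bar>a\<bar> < 1" "real_of_int \<bar>b\<bar> < 1" by simp_all
  then have "\<bar>a\<bar> < 1" "\<bar>b\<bar> < 1" by simp_all
  then have "a = 0" "b = 0" by linarith+
  then show ?thesis using \<open>Re c = of_int a\<close> \<open>Im c = of_int b\<close> by (simp add: complex_eq_iff)
qed


theorem corollary5p1:
  fixes X :: "(complex \<Rightarrow> complex) set" and N :: "(complex \<Rightarrow> complex) \<Rightarrow> real"
    and f :: "complex \<Rightarrow> complex" and p :: "nat \<Rightarrow> complex poly"
  assumes "admissible_space X N"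
    and "f \<in> X"
    and "\<not> (\<exists>q :: complex poly. \<forall>z\<in>ball 0 1. f z = poly q z)"
    and "\<forall>n\<ge>1. p n \<in> int_polys n"
    and "(\<lambda>n. N (\<lambda>z. f z - poly (p n) z)) \<longlonglongrightarrow> 0"
  shows "conv_radius (\<lambda>n. (deriv ^^ n) f 0 / fact n) \<le> 1"
proof -
  note adm = assms(1)[unfolded admissible_space_def]
  have hol: "\<forall>f\<in>X. f analytic_on ball 0 1"
    by (rule adm[THEN conjunct1])
  have extX: "\<forall>f\<in>X. \<forall>g. (\<forall>z\<in>ball 0 1. g z = f z) \<longrightarrow> g \<in> X \<and> N g = N f"
    by (rule adm[THEN conjunct2, THEN conjunct1])
  have nonneg: "\<forall>f\<in>X. N f \<ge> 0"
    by (rule adm[THEN conjunct2, THEN conjunct2, THEN conjunct2, THEN conjunct2, THEN conjunct1])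
  have zero: "\<forall>f\<in>X. N f = 0 \<longleftrightarrow> (\<forall>z\<in>ball 0 1. f z = 0)"
    by (rule adm[THEN conjunct2, THEN conjunct2, THEN conjunct2, THEN conjunct2, THEN conjunct2, THEN conjunct1])
  have scal: "\<forall>f\<in>X. \<forall>c::complex. N (\<lambda>z. c * f z) = norm c * N f"
    by (rule adm[THEN conjunct2, THEN conjunct2, THEN conjunct2, THEN conjunct2, THEN conjunct2, THEN conjunct2, THEN conjunct1])
  have add: "\<forall>f\<in>X. \<forall>g\<in>X. (\<lambda>z. f z + g z) \<in> X"
    by (rule adm[THEN conjunct2, THEN conjunct2, THEN conjunct1])
  have smul: "\<forall>f\<in>X. \<forall>c::complex. (\<lambda>z. c * f z) \<in> X"
    by (rule adm[THEN conjunct2, THEN conjunct2, THEN conjunct2, THEN conjunct1])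
  have entire: "\<forall>f. f holomorphic_on UNIV \<longrightarrow> f \<in> X"
    by (rule adm[THEN conjunct2, THEN conjunct2, THEN conjunct2, THEN conjunct2, THEN conjunct2, THEN conjunct2, THEN conjunct2, THEN conjunct2, THEN conjunct2, THEN conjunct2, THEN conjunct1])
  have conv: "\<forall>f\<in>X. \<forall>g::real \<Rightarrow> complex. g absolutely_integrable_on {0..2*pi} \<longrightarrow>
       rot_conv f g \<in> X \<and>
       N (rot_conv f g) \<le> (1 / (2 * pi)) * integral {0..2*pi} (\<lambda>t. norm (g t)) * N f"
    by (rule adm[THEN conjunct2, THEN conjunct2, THEN conjunct2, THEN conjunct2, THEN conjunct2, THEN conjunct2, THEN conjunct2, THEN conjunct2, THEN conjunct2, THEN conjunct2, THEN conjunct2])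
  define a where "a = (\<lambda>k. (deriv ^^ k) f 0 / fact k)"
  have holf: "f holomorphic_on ball 0 1"
    using hol assms(2) analytic_imp_holomorphic by blast
  have polyhol: "(\<lambda>z. poly q z) holomorphic_on S" for q :: "complex poly" and S
    by (intro holomorphic_intros)
  have hX: "(\<lambda>z. f z - poly (p n) z) \<in> X" for n
  proof -
    have pX: "(\<lambda>z. poly (p n) z) \<in> X" using entire polyhol[of "p n" UNIV] by blast
    have m: "(\<lambda>z. (-1) * poly (p n) z) \<in> X" using smul pX by blast
    have "(\<lambda>z. f z + (-1) * poly (p n) z) \<in> X" by (rule add[rule_format, OF assms(2) m])
    from extX[rule_format, OF this, of "\<lambda>z. f z - poly (p n) z"] show ?thesis by simp
  qed
  have coeff_lim: "(\<lambda>n. coeff (p n) k) \<longlonglongrightarrow> a k" for k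
  proof -
    define g where "g = (\<lambda>t::real. cis (- (real k * t)))"
    define e where "e = (\<lambda>z::complex. z ^ k)"
    have eX: "e \<in> X" unfolding e_def using entire by (auto intro!: holomorphic_intros)
    have "N e \<noteq> 0"
    proof
      assume "N e = 0"
      then have "e (1/2) = 0" using zero eX by auto
      then show False by (simp add: e_def)
    qed
    then have Ne: "N e > 0" using nonneg eX by force
    have gi: "g absolutely_integrable_on {0..2*pi}"
      unfolding g_def by (rule absolutely_integrable_continuous_real, intro continuous_intros)
    have ig: "integral {0..2*pi} (\<lambda>t. norm (g t)) = 2*pi" by (simp add: g_def)
    have bound: "norm (a k - coeff (p n) k) * N e \<le> N (\<lambda>z. f z - poly (p n) z)" for n
    proof -
      define h where "h = (\<lambda>z. f z - poly (p n) z)"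
      have holh: "h holomorphic_on ball 0 1" unfolding h_def using holf by (intro holomorphic_intros)
      have rc0: "rot_conv h g \<in> X \<and> N (rot_conv h g) \<le> (1 / (2 * pi)) * integral {0..2*pi} (\<lambda>t. norm (g t)) * N h"
        unfolding h_def by (rule conv[rule_format, OF hX[of n] gi])
      note rc = rc0[THEN conjunct1] rc0[THEN conjunct2]
      have "(deriv ^^ k) h 0 = (deriv ^^ k) f 0 - (deriv ^^ k) (\<lambda>z. poly (p n) z) 0"
        unfolding h_def by (rule higher_deriv_diff[OF holf polyhol open_ball]) simp
      then have cf: "(deriv ^^ k) h 0 / fact k = a k - coeff (p n) k"
        using poly_taylor_coeff[of k "p n"] by (simp add: a_def diff_divide_distrib)
      have eq: "\<forall>z\<in>ball 0 1. (a k - coeff (p n) k) * e z = rot_conv h g z"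
      proof
        fix z :: complex assume z: "z \<in> ball 0 1"
        have "rot_conv h g z = (deriv ^^ k) h 0 / fact k * z ^ k"
          unfolding g_def by (rule rot_conv_coeff[OF holh z])
        then show "(a k - coeff (p n) k) * e z = rot_conv h g z"
          by (simp only: cf e_def)
      qed
      have "N (\<lambda>z. (a k - coeff (p n) k) * e z) = N (rot_conv h g)"
      proof -
        have "(\<lambda>z. (a k - coeff (p n) k) * e z) \<in> X \<and> N (\<lambda>z. (a k - coeff (p n) k) * e z) = N (rot_conv h g)"
          by (rule extX[rule_format, OF rc(1)]) (use eq in auto)
        then show ?thesis by (rule conjunct2)
      qed
      also have "\<dots> \<le> N h" using rc(2) ig by simp
      finally show ?thesis using scal eX unfolding h_def by simp
    qed
    have "(\<lambda>n. coeff (p n) k - a k) \<longlonglongrightarrow> 0"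
    proof (rule Lim_null_comparison)
      show "\<forall>\<^sub>F n in sequentially. norm (coeff (p n) k - a k) \<le> N (\<lambda>z. f z - poly (p n) z) / N e"
        using bound Ne by (auto simp: pos_le_divide_eq norm_minus_commute)
      show "(\<lambda>n. N (\<lambda>z. f z - poly (p n) z) / N e) \<longlonglongrightarrow> 0"
        using tendsto_divide_zero[OF assms(5)] by simp
    qed
    then show ?thesis by (rule LIM_zero_cancel)
  qed
  have ints: "complex_integer (a k)" for k
  proof -
    have ev: "eventually (\<lambda>n. complex_integer (coeff (p n) k)) sequentially"
      using assms(4) unfolding int_polys_def eventually_sequentially by auto
    have "Re (a k) \<in> \<int>"
      by (rule Lim_in_closed_set[OF closed_Ints _ _ tendsto_Re[OF coeff_lim]])
         (use ev in \<open>auto simp: complex_integer_def elim: eventually_mono\<close>)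
    moreover have "Im (a k) \<in> \<int>"
      by (rule Lim_in_closed_set[OF closed_Ints _ _ tendsto_Im[OF coeff_lim]])
         (use ev in \<open>auto simp: complex_integer_def elim: eventually_mono\<close>)
    ultimately show ?thesis by (simp add: complex_integer_def)
  qed
  show ?thesis
  proof (rule ccontr)
    assume "\<not> ?thesis"
    then have "ereal (norm (1::complex)) < conv_radius a" by (simp add: a_def one_ereal_def[symmetric] not_le)
    then have "summable (\<lambda>n. a n * 1 ^ n)" by (rule summable_in_conv_radius)
    then have "a \<longlonglongrightarrow> 0" using summable_LIMSEQ_zero by simp
    then have "eventually (\<lambda>n. norm (a n) < 1) sequentially"
      using order_tendstoD(2)[OF tendsto_norm[OF \<open>a \<longlonglongrightarrow> 0\<close>]] by simp
    then obtain M where M0: "\<And>n. n \<ge> M \<Longrightarrow> norm (a n) < 1"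
      unfolding eventually_sequentially by blast
    have M: "a n = 0" if "n \<ge> M" for n
      by (rule gauss_int_small[OF ints M0[OF that]])
    define q where "q = (\<Sum>j<M. monom (a j) j)"
    have cq: "coeff q n = a n" for n
      using M[of n] by (auto simp: q_def coeff_sum)
    have "\<forall>z\<in>ball 0 1. f z = poly q z"
    proof
      fix z :: complex assume z: "z \<in> ball 0 1"
      show "f z = poly q z"
      proof (rule holomorphic_fun_eq_on_ball[OF holf polyhol z])
        fix n
        have "(deriv ^^ n) (\<lambda>z. poly q z) 0 = coeff q n * fact n"
          using poly_taylor_coeff[of n q] by (simp add: field_simps)
        also have "\<dots> = (deriv ^^ n) f 0" by (simp add: cq a_def)
        finally show "(deriv ^^ n) f 0 = (deriv ^^ n) (\<lambda>z. poly q z) 0" by simp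
      qed
    qed
    with assms(3) show False by blast
  qed
qed

end
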